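(* For every integer $d\ge 2$, $\mathcal Q_d$ is an open subset of $\mathcal C_d$ (and hence of $\mathcal A_d$).
   Context: A polynomial knot is a map $\phi:\mathbb R\to\mathbb R^3$ with real polynomial components which is a smooth embedding ($\phi$ injective and $\phi'(t)\ne0$ for all $t$). For $d\ge2$, $\mathcal A_d$ is the set of polynomial maps $t\mapsto(f(t),g(t),h(t))$ with $\deg f\le d-2$, $\deg g\le d-1$, $\deg h\le d$, topologized via the bijection with Euclidean $\mathbb R^{3d}$ sending $(f,g,h)$ to its coefficient vector $(a_0,\dots,a_{d-2},b_0,\dots,b_{d-1},c_0,\dots,c_d)$, where $f=\sum a_it^i$, $g=\sum b_it^i$, $h=\sum c_it^i$. $\mathcal C_d\subseteq\mathcal A_d$ is the subspace of maps with $\deg f=d-2$, $\deg g=d-1$, $\deg h=d$ exactly, and $\mathcal Q_d$ is the set of polynomial knots in $\mathcal C_d$. *)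

theory Defs
  imports "HOL-Analysis.Analysis"
begin

text \<open>The type carries the product topology (pointwise convergence of coefficients); on the
  set A d, where all but 3d coefficients vanish, this is the Euclidean topology of R^(3d).\<close>
type_synonym coeffs = "(nat \<Rightarrow> real) \<times> (nat \<Rightarrow> real) \<times> (nat \<Rightarrow> real)"

definition A_set :: "nat \<Rightarrow> coeffs set" where
  "A_set d = {(a, b, c). (\<forall>i>d - 2. a i = 0) \<and> (\<forall>i>d - 1. b i = 0) \<and> (\<forall>i>d. c i = 0)}"

definition C_set :: "nat \<Rightarrow> coeffs set" where
  "C_set d = {(a, b, c). (a, b, c) \<in> A_set d \<and> a (d - 2) \<noteq> 0 \<and> b (d - 1) \<noteq> 0 \<and> c d \<noteq> 0}"

definition polymap :: "nat \<Rightarrow> coeffs \<Rightarrow> real \<Rightarrow> real \<times> real \<times> real" where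
  "polymap d p t = (case p of (a, b, c) \<Rightarrow>
     ((\<Sum>i\<le>d. a i * t ^ i), (\<Sum>i\<le>d. b i * t ^ i), (\<Sum>i\<le>d. c i * t ^ i)))"

definition poly_knot :: "(real \<Rightarrow> real \<times> real \<times> real) \<Rightarrow> bool" where
  "poly_knot \<phi> \<longleftrightarrow> inj \<phi> \<and> (\<forall>t. \<phi> differentiable (at t) \<and> vector_derivative \<phi> (at t) \<noteq> 0)"

definition Q_set :: "nat \<Rightarrow> coeffs set" where
  "Q_set d = {p \<in> C_set d. poly_knot (polymap d p)}"

end

theory Submission
  imports Defs
begin

definition Qp :: "nat \<Rightarrow> real \<Rightarrow> real \<Rightarrow> real" where
  "Qp i s t = (\<Sum>j<i. t^(i - Suc j) * s^j)"

definition dd :: "nat \<Rightarrow> (nat \<Rightarrow> real) \<Rightarrow> real \<Rightarrow> real \<Rightarrow> real" where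
  "dd N e s t = (\<Sum>i\<le>N. e i * Qp i s t)"

lemma Qp_diff: "s^i - t^i = (s - t) * Qp i s t"
  unfolding Qp_def by (rule power_diff_sumr2)

lemma Qp_diag: "Qp i t t = of_nat i * t^(i - 1)"
proof -
  have "\<And>j. j < i \<Longrightarrow> t^(i - Suc j) * t^j = t^(i-1)"
    by (simp flip: power_add)
  then show ?thesis unfolding Qp_def by simp
qed

lemma poly_diff: "(\<Sum>i\<le>N. e i * s^i) - (\<Sum>i\<le>N. e i * t^i) = (s - t) * dd N e s t"
proof -
  have "(\<Sum>i\<le>N. e i * s^i) - (\<Sum>i\<le>N. e i * t^i) = (\<Sum>i\<le>N. e i * (s^i - t^i))"
    by (simp add: sum_subtractf right_diff_distrib)
  also have "\<dots> = (\<Sum>i\<le>N. (s - t) * (e i * Qp i s t))"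
    by (simp add: Qp_diff mult_ac)
  finally show ?thesis unfolding dd_def by (simp add: sum_distrib_left)
qed

lemma poly_deriv: "((\<lambda>t. \<Sum>i\<le>N. e i * t^i) has_real_derivative dd N e t t) (at t)"
proof -
  have "((\<lambda>t. \<Sum>i\<le>N. e i * t^i) has_real_derivative (\<Sum>i\<le>N. e i * (of_nat i * t^(i - 1)))) (at t)"
    by (intro derivative_eq_intros) auto
  then show ?thesis unfolding dd_def Qp_diag .
qed

lemma knot_iff:
  "poly_knot (polymap d (a,b,c)) \<longleftrightarrow> (\<forall>s t. (dd d a s t, dd d b s t, dd d c s t) \<noteq> 0)"
proof -
  let ?P = "\<lambda>e t. \<Sum>i\<le>d. e i * t^i"
  have phi: "polymap d (a,b,c) = (\<lambda>t. (?P a t, ?P b t, ?P c t))"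
    by (auto simp: polymap_def)
  have vd: "(polymap d (a,b,c) has_vector_derivative (dd d a t t, dd d b t t, dd d c t t)) (at t)" for t
    unfolding phi
    by (intro has_vector_derivative_Pair)
       (simp_all add: has_real_derivative_iff_has_vector_derivative[symmetric] poly_deriv)
  have diff: "polymap d (a,b,c) s - polymap d (a,b,c) t
     = (s - t) *\<^sub>R (dd d a s t, dd d b s t, dd d c s t)" for s t
    unfolding phi by (simp add: poly_diff)
  show ?thesis
  proof
    assume K: "poly_knot (polymap d (a,b,c))"
    show "\<forall>s t. (dd d a s t, dd d b s t, dd d c s t) \<noteq> 0"
    proof (intro allI)
      fix s t
      show "(dd d a s t, dd d b s t, dd d c s t) \<noteq> 0"
      proof (cases "s = t")
        case True
        then show ?thesis using K vd[of t] vector_derivative_at[OF vd[of t]]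
          unfolding poly_knot_def by auto
      next
        case False
        show ?thesis
        proof
          assume "(dd d a s t, dd d b s t, dd d c s t) = 0"
          then have "polymap d (a,b,c) s = polymap d (a,b,c) t" using diff[of s t] by simp
          with K False show False unfolding poly_knot_def inj_def by blast
        qed
      qed
    qed
  next
    assume N: "\<forall>s t. (dd d a s t, dd d b s t, dd d c s t) \<noteq> 0"
    have "inj (polymap d (a,b,c))"
    proof (rule injI)
      fix s t assume "polymap d (a,b,c) s = polymap d (a,b,c) t"
      then have "(s - t) *\<^sub>R (dd d a s t, dd d b s t, dd d c s t) = 0" using diff[of s t] by simp
      with N show "s = t" by (metis scaleR_eq_0_iff eq_iff_diff_eq_0)
    qed
    moreover have "polymap d (a,b,c) differentiable (at t) \<and> vector_derivative (polymap d (a,b,c)) (at t) \<noteq> 0" for t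
      using vd[of t] vector_derivative_at[OF vd[of t]] N differentiableI_vector by metis
    ultimately show "poly_knot (polymap d (a,b,c))" unfolding poly_knot_def by blast
  qed
qed


lemma Qp_abs: "\<bar>Qp i s t\<bar> \<le> of_nat i * (max \<bar>s\<bar> \<bar>t\<bar>) ^ (i - 1)"
proof -
  let ?M = "max \<bar>s\<bar> \<bar>t\<bar>"
  have "\<bar>Qp i s t\<bar> \<le> (\<Sum>j<i. \<bar>t^(i - Suc j) * s^j\<bar>)"
    unfolding Qp_def by (rule sum_abs)
  also have "\<dots> \<le> (\<Sum>j<i. ?M^(i-1))"
  proof (rule sum_mono)
    fix j assume j: "j \<in> {..<i}"
    have "\<bar>t^(i - Suc j) * s^j\<bar> = \<bar>t\<bar>^(i - Suc j) * \<bar>s\<bar>^j" by (simp add: abs_mult power_abs)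
    also have "\<dots> \<le> ?M^(i - Suc j) * ?M^j"
      by (intro mult_mono power_mono) auto
    also have "\<dots> = ?M^(i-1)" using j by (simp flip: power_add)
    finally show "\<bar>t^(i - Suc j) * s^j\<bar> \<le> ?M^(i-1)" .
  qed
  finally show ?thesis by simp
qed

lemma Qp_odd:
  assumes "odd n"
  shows "Qp n s t \<ge> (max \<bar>s\<bar> \<bar>t\<bar>) ^ (n - 1) / 2"
proof -
  let ?M = "max \<bar>s\<bar> \<bar>t\<bar>"
  have M0: "?M \<ge> 0" by simp
  have ev: "even (n - 1)" using assms by simp
  have n1: "n \<ge> 1" using assms by (cases n) auto
  show ?thesis
  proof (cases "s * t \<ge> 0")
    case True
    have trm: "t^(n - Suc j) * s^j = \<bar>t\<bar>^(n - Suc j) * \<bar>s\<bar>^j" if j: "j < n" for j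
    proof (cases "s \<ge> 0 \<and> t \<ge> 0")
      case True then show ?thesis by simp
    next
      case False
      with \<open>s*t \<ge> 0\<close> have "s \<le> 0" "t \<le> 0"
        by (auto simp: zero_le_mult_iff)
      then have "s = - \<bar>s\<bar>" "t = - \<bar>t\<bar>" by auto
      then have "t^(n - Suc j) * s^j = (-1)^(n - Suc j + j) * (\<bar>t\<bar>^(n - Suc j) * \<bar>s\<bar>^j)"
        by (metis (no_types, lifting) mult.assoc mult.left_commute power_add power_minus)
      moreover have "n - Suc j + j = n - 1" using j by simp
      ultimately show ?thesis using ev by simp
    qed
    have nn: "\<And>j. j \<in> {..<n} \<Longrightarrow> 0 \<le> t^(n - Suc j) * s^j" using trm by simp
    have "t^(n - Suc 0) * s^0 \<le> Qp n s t"
      unfolding Qp_def by (rule member_le_sum[OF _ nn]) (use n1 in auto)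
    moreover have "t^(n - Suc (n-1)) * s^(n-1) \<le> Qp n s t"
      unfolding Qp_def by (rule member_le_sum[OF _ nn]) (use n1 in auto)
    ultimately have "\<bar>t\<bar>^(n-1) \<le> Qp n s t" "\<bar>s\<bar>^(n-1) \<le> Qp n s t"
      using trm[of 0] trm[of "n-1"] n1 by auto
    then have "?M^(n-1) \<le> Qp n s t" by (simp add: max_def)
    moreover have "?M^(n-1)/2 \<le> ?M^(n-1)" by simp
    ultimately show ?thesis by linarith
  next
    case False
    then have st: "s \<noteq> t" by auto
    have eq: "(s - t) * Qp n s t = s^n - t^n" by (simp add: Qp_diff)
    have key: "\<bar>s - t\<bar> = \<bar>s\<bar> + \<bar>t\<bar> \<and> \<bar>s^n - t^n\<bar> = \<bar>s\<bar>^n + \<bar>t\<bar>^n \<and> sgn (s - t) = sgn (s^n - t^n)"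
    proof (cases "s > 0")
      case True
      with False have "t < 0" by (auto simp: zero_le_mult_iff)
      have p1: "s^n > 0" using True by simp
      have p2: "t^n < 0" using \<open>t<0\<close> assms by (simp add: odd_pos power_less_zero_eq)
      have p3: "(\<bar>t\<bar>)^n = - (t^n)" using p2 by (simp flip: power_abs)
      have p4: "(\<bar>s\<bar>)^n = s^n" using True by simp
      have "s^n - t^n > 0" using p1 p2 by linarith
      then show ?thesis using True \<open>t<0\<close> p3 p4 by auto
    next
      case nt: False
      with False have "s < 0" "t > 0" by (auto simp: mult_less_0_iff not_le)
      have p1: "t^n > 0" using \<open>t>0\<close> by simp
      have p2: "s^n < 0" using \<open>s<0\<close> assms by (simp add: power_less_zero_eq)
      have p3: "(\<bar>s\<bar>)^n = - (s^n)" using p2 by (simp flip: power_abs)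
      have p4: "(\<bar>t\<bar>)^n = t^n" using \<open>t>0\<close> by simp
      have "s^n - t^n < 0" using p1 p2 by linarith
      then show ?thesis using \<open>s<0\<close> \<open>t>0\<close> p3 p4 by auto
    qed
    have pos: "Qp n s t > 0"
    proof -
      have "sgn (s - t) * sgn (Qp n s t) = sgn (s^n - t^n)" using eq by (metis sgn_mult)
      then have "sgn (s - t) * sgn (Qp n s t) = sgn (s - t)" using key by simp
      then have "sgn (Qp n s t) = 1" using st by (simp add: sgn_if split: if_splits)
      then show ?thesis by (simp add: sgn_1_pos)
    qed
    have "(\<bar>s\<bar> + \<bar>t\<bar>) * Qp n s t = \<bar>s\<bar>^n + \<bar>t\<bar>^n"
      using arg_cong[OF eq, of abs] key pos by (simp add: abs_mult)
    moreover have "\<bar>s\<bar>^n + \<bar>t\<bar>^n \<ge> ?M^n" by (simp add: max_def)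
    moreover have "\<bar>s\<bar> + \<bar>t\<bar> \<le> 2 * ?M" by simp
    moreover have "?M > 0" using st by auto
    ultimately have "2 * ?M * Qp n s t \<ge> ?M^n"
      by (smt (verit, best) mult_right_mono pos)
    moreover have "?M^n = ?M * ?M^(n-1)" using n1 by (metis power_eq_if not_one_le_zero)
    ultimately have "?M * (2 * Qp n s t) \<ge> ?M * ?M^(n-1)" by (simp add: mult_ac)
    then have "2 * Qp n s t \<ge> ?M^(n-1)" using \<open>?M > 0\<close> by simp
    then show ?thesis by simp
  qed
qed


lemma dd_split:
  assumes "n \<le> N" "\<forall>i>n. e i = 0"
  shows "dd N e s t = e n * Qp n s t + (\<Sum>i<n. e i * Qp i s t)"
proof -
  have "dd N e s t = (\<Sum>i\<le>n. e i * Qp i s t)"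
    unfolding dd_def using assms by (intro sum.mono_neutral_right) auto
  also have "\<dots> = e n * Qp n s t + (\<Sum>i<n. e i * Qp i s t)"
    by (simp add: lessThan_Suc_atMost[symmetric])
  finally show ?thesis .
qed

lemma outside_core:
  assumes "odd n" "n \<le> N" "\<forall>i>n. e i = 0" "\<bar>e n\<bar> \<ge> L" "L > 0"
    "(\<Sum>i<n. \<bar>e i\<bar> * of_nat i) \<le> B" "max \<bar>s\<bar> \<bar>t\<bar> \<ge> 1" "max \<bar>s\<bar> \<bar>t\<bar> * L > 2 * B"
  shows "dd N e s t \<noteq> 0"
proof -
  let ?M = "max \<bar>s\<bar> \<bar>t\<bar>"
  have lead: "\<bar>e n * Qp n s t\<bar> \<ge> L * ?M^(n-1)/2"
  proof -
    have "0 \<le> ?M^(n-1)/2" by simp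
    then have "Qp n s t \<ge> 0" using Qp_odd[OF assms(1), of s t] by linarith
    then have "\<bar>e n * Qp n s t\<bar> = \<bar>e n\<bar> * Qp n s t"
      by (simp add: abs_mult)
    also have "\<dots> \<ge> L * (?M^(n-1)/2)"
      using Qp_odd[OF assms(1), of s t] assms(4) by (intro mult_mono) auto
    finally show ?thesis by simp
  qed
  have low: "\<bar>\<Sum>i<n. e i * Qp i s t\<bar> \<le> B * ?M^(n-2)"
  proof -
    have "\<bar>\<Sum>i<n. e i * Qp i s t\<bar> \<le> (\<Sum>i<n. \<bar>e i\<bar> * of_nat i * ?M^(n-2))"
    proof (rule order_trans[OF sum_abs], rule sum_mono)
      fix i assume i: "i \<in> {..<n}"
      have "\<bar>e i * Qp i s t\<bar> \<le> \<bar>e i\<bar> * (of_nat i * ?M^(i-1))"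
        unfolding abs_mult by (intro mult_left_mono Qp_abs) auto
      also have "\<dots> \<le> \<bar>e i\<bar> * (of_nat i * ?M^(n-2))"
      proof (cases "i = 0")
        case False
        then have "i - 1 \<le> n - 2" using i by auto
        then have "?M^(i-1) \<le> ?M^(n-2)" using assms(7) by (intro power_increasing) auto
        then show ?thesis by (intro mult_left_mono) auto
      qed simp
      finally show "\<bar>e i * Qp i s t\<bar> \<le> \<bar>e i\<bar> * of_nat i * ?M^(n-2)" by (simp add: mult_ac)
    qed
    also have "\<dots> = (\<Sum>i<n. \<bar>e i\<bar> * of_nat i) * ?M^(n-2)" by (simp add: sum_distrib_right)
    also have "\<dots> \<le> B * ?M^(n-2)" using assms(6) by (intro mult_right_mono) auto
    finally show ?thesis .
  qed
  have "\<bar>\<Sum>i<n. e i * Qp i s t\<bar> < \<bar>e n * Qp n s t\<bar>"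
  proof (cases "n = 1")
    case True
    then show ?thesis using lead assms(5) by (simp add: Qp_def)
  next
    case False
    then have n2: "n \<ge> 2" using assms(1) by (cases n) auto
    have Mp: "?M^(n-2) > 0" using assms(7) by simp
    have eq: "?M^(n-1) = ?M * ?M^(n-2)" using n2
      by (metis Suc_diff_Suc Suc_1 diff_Suc_1 less_le_trans lessI power_Suc)
    have "B * ?M^(n-2) < (?M * L / 2) * ?M^(n-2)"
      using assms(8) Mp by (intro mult_strict_right_mono) auto
    also have "\<dots> = L * ?M^(n-1)/2" using eq by (simp add: mult_ac)
    finally show ?thesis using low lead by linarith
  qed
  then show ?thesis using dd_split[OF assms(2,3), of s t] by auto
qed

lemma outside:
  fixes e :: "nat \<Rightarrow> real"
  assumes "odd n" "n \<le> N" "e n \<noteq> 0"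
  shows "\<exists>R. \<forall>e' s t. (\<forall>i>n. e' i = 0) \<longrightarrow> (\<forall>i\<le>n. \<bar>e' i - e i\<bar> < min 1 (\<bar>e n\<bar>/2))
           \<longrightarrow> max \<bar>s\<bar> \<bar>t\<bar> > R \<longrightarrow> dd N e' s t \<noteq> 0"
proof -
  define B where "B = (\<Sum>i<n. (\<bar>e i\<bar> + 1) * of_nat i)"
  define R where "R = max 1 (4 * B / \<bar>e n\<bar>)"
  have en: "\<bar>e n\<bar> > 0" using assms(3) by simp
  show ?thesis
  proof (intro exI allI impI)
    fix e' :: "nat \<Rightarrow> real" and s t
    assume z: "\<forall>i>n. e' i = 0" and cl: "\<forall>i\<le>n. \<bar>e' i - e i\<bar> < min 1 (\<bar>e n\<bar>/2)"
      and M: "max \<bar>s\<bar> \<bar>t\<bar> > R"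
    have "\<bar>e' n - e n\<bar> < \<bar>e n\<bar>/2" using cl by auto
    then have L: "\<bar>e' n\<bar> \<ge> \<bar>e n\<bar>/2" by linarith
    have Bb: "(\<Sum>i<n. \<bar>e' i\<bar> * of_nat i) \<le> B"
      unfolding B_def
    proof (rule sum_mono)
      fix i assume "i \<in> {..<n}"
      then have "\<bar>e' i - e i\<bar> < 1" using cl by auto
      then have "\<bar>e' i\<bar> \<le> \<bar>e i\<bar> + 1" by linarith
      then show "\<bar>e' i\<bar> * of_nat i \<le> (\<bar>e i\<bar> + 1) * of_nat i" by (intro mult_right_mono) auto
    qed
    have M1: "max \<bar>s\<bar> \<bar>t\<bar> \<ge> 1" using M unfolding R_def by linarith
    have "max \<bar>s\<bar> \<bar>t\<bar> > 4 * B / \<bar>e n\<bar>" using M unfolding R_def by linarith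
    then have "max \<bar>s\<bar> \<bar>t\<bar> * \<bar>e n\<bar> > 4 * B" using en by (simp add: pos_divide_less_eq)
    then have "max \<bar>s\<bar> \<bar>t\<bar> * (\<bar>e n\<bar>/2) > 2 * B" by simp
    then show "dd N e' s t \<noteq> 0"
      using outside_core[OF assms(1,2) z L _ Bb M1] en by simp
  qed
qed


lemma dd_close:
  assumes "\<forall>i\<le>N. \<bar>x' i - x i\<bar> \<le> \<delta>" "max \<bar>s\<bar> \<bar>t\<bar> \<le> R"
  shows "\<bar>dd N x' s t - dd N x s t\<bar> \<le> \<delta> * (\<Sum>i\<le>N. of_nat i * R^(i-1))"
proof -
  have "\<bar>dd N x' s t - dd N x s t\<bar> = \<bar>\<Sum>i\<le>N. (x' i - x i) * Qp i s t\<bar>"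
    unfolding dd_def by (simp add: sum_subtractf left_diff_distrib)
  also have "\<dots> \<le> (\<Sum>i\<le>N. \<delta> * (of_nat i * R^(i-1)))"
  proof (rule order_trans[OF sum_abs], rule sum_mono)
    fix i assume i: "i \<in> {..N}"
    have "\<bar>(x' i - x i) * Qp i s t\<bar> = \<bar>x' i - x i\<bar> * \<bar>Qp i s t\<bar>" by (simp add: abs_mult)
    also have "\<dots> \<le> \<delta> * (of_nat i * R^(i-1))"
    proof (rule mult_mono)
      show "\<bar>x' i - x i\<bar> \<le> \<delta>" using assms(1) i by auto
      have "\<bar>Qp i s t\<bar> \<le> of_nat i * (max \<bar>s\<bar> \<bar>t\<bar>)^(i-1)" by (rule Qp_abs)
      also have "\<dots> \<le> of_nat i * R^(i-1)"
        using assms(2) by (intro mult_left_mono power_mono) auto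
      finally show "\<bar>Qp i s t\<bar> \<le> of_nat i * R^(i-1)" .
      show "0 \<le> \<delta>" using assms(1) by (meson abs_ge_zero atMost_iff le_refl order_trans zero_le)
    qed simp
    finally show "\<bar>(x' i - x i) * Qp i s t\<bar> \<le> \<delta> * (of_nat i * R^(i-1))" .
  qed
  finally show ?thesis by (simp add: sum_distrib_left)
qed

lemma cont_coord1: "continuous_on UNIV (\<lambda>q::coeffs. fst q i)"
  using continuous_on_compose2[OF continuous_on_product_coordinates continuous_on_fst[OF continuous_on_id]]
  by simp
lemma cont_coord2: "continuous_on UNIV (\<lambda>q::coeffs. fst (snd q) i)"
  using continuous_on_compose2[OF continuous_on_product_coordinates continuous_on_fst[OF continuous_on_snd[OF continuous_on_id]]]
  by simp
lemma cont_coord3: "continuous_on UNIV (\<lambda>q::coeffs. snd (snd q) i)"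
  using continuous_on_compose2[OF continuous_on_product_coordinates continuous_on_snd[OF continuous_on_snd[OF continuous_on_id]]]
  by simp

lemma open_V:
  "open {(a', b', c'). \<forall>i\<le>d. \<bar>a' i - a i\<bar> < \<delta> \<and> \<bar>b' i - b i\<bar> < \<delta> \<and> \<bar>c' i - (c::nat\<Rightarrow>real) i\<bar> < \<delta>}"
proof -
  have eq: "{(a', b', c'). \<forall>i\<le>d. \<bar>a' i - a i\<bar> < \<delta> \<and> \<bar>b' i - b i\<bar> < \<delta> \<and> \<bar>c' i - c i\<bar> < \<delta>}
    = (\<Inter>i\<in>{..d}. {q::coeffs. \<bar>fst q i - a i\<bar> < \<delta>} \<inter> {q. \<bar>fst (snd q) i - b i\<bar> < \<delta>} \<inter> {q. \<bar>snd (snd q) i - c i\<bar> < \<delta>})"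
    by auto
  show ?thesis unfolding eq
    by (intro open_INT finite_atMost ballI open_Int open_Collect_less continuous_intros
        cont_coord1 cont_coord2 cont_coord3)
qed


lemma local_open:
  assumes d2: "d \<ge> 2" and pQ: "(a,b,c) \<in> Q_set d"
  shows "\<exists>V. open V \<and> (a,b,c) \<in> V \<and> A_set d \<inter> V \<subseteq> Q_set d"
proof -
  have pC: "(a,b,c) \<in> C_set d" using pQ unfolding Q_set_def by auto
  then have lead: "a (d-2) \<noteq> 0" "b (d-1) \<noteq> 0" "c d \<noteq> 0" unfolding C_set_def by auto
  have N: "\<forall>s t. (dd d a s t, dd d b s t, dd d c s t) \<noteq> 0"
    using pQ knot_iff unfolding Q_set_def by blast
  obtain R \<eta> where eta: "\<eta> > 0" and Rout: "\<forall>a' b' c' s t. (a',b',c') \<in> A_set d \<longrightarrow>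
      (\<forall>i\<le>d. \<bar>b' i - b i\<bar> < \<eta> \<and> \<bar>c' i - c i\<bar> < \<eta>) \<longrightarrow> max \<bar>s\<bar> \<bar>t\<bar> > R \<longrightarrow>
      (dd d b' s t \<noteq> 0 \<or> dd d c' s t \<noteq> 0)"
  proof (cases "odd d")
    case True
    obtain R where R: "\<forall>e' s t. (\<forall>i>d. e' i = 0) \<longrightarrow> (\<forall>i\<le>d. \<bar>e' i - c i\<bar> < min 1 (\<bar>c d\<bar>/2))
           \<longrightarrow> max \<bar>s\<bar> \<bar>t\<bar> > R \<longrightarrow> dd d e' s t \<noteq> 0"
      using outside[of d d c] True lead(3) by blast
    show ?thesis
    proof (rule that[of "min 1 (\<bar>c d\<bar>/2)" R])
      show "min 1 (\<bar>c d\<bar>/2) > 0" using lead by simp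
      show "\<forall>a' b' c' s t. (a',b',c') \<in> A_set d \<longrightarrow>
        (\<forall>i\<le>d. \<bar>b' i - b i\<bar> < min 1 (\<bar>c d\<bar>/2) \<and> \<bar>c' i - c i\<bar> < min 1 (\<bar>c d\<bar>/2)) \<longrightarrow> max \<bar>s\<bar> \<bar>t\<bar> > R \<longrightarrow>
        (dd d b' s t \<noteq> 0 \<or> dd d c' s t \<noteq> 0)"
        using R unfolding A_set_def by blast
    qed
  next
    case False
    then have od: "odd (d-1)" using d2 by simp
    obtain R where R: "\<forall>e' s t. (\<forall>i>d-1. e' i = 0) \<longrightarrow> (\<forall>i\<le>d-1. \<bar>e' i - b i\<bar> < min 1 (\<bar>b (d-1)\<bar>/2))
           \<longrightarrow> max \<bar>s\<bar> \<bar>t\<bar> > R \<longrightarrow> dd d e' s t \<noteq> 0"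
      using outside[of "d-1" d b] od lead(2) by auto
    show ?thesis
    proof (rule that[of "min 1 (\<bar>b (d-1)\<bar>/2)" R])
      show "min 1 (\<bar>b (d-1)\<bar>/2) > 0" using lead by simp
      show "\<forall>a' b' c' s t. (a',b',c') \<in> A_set d \<longrightarrow>
        (\<forall>i\<le>d. \<bar>b' i - b i\<bar> < min 1 (\<bar>b (d-1)\<bar>/2) \<and> \<bar>c' i - c i\<bar> < min 1 (\<bar>b (d-1)\<bar>/2)) \<longrightarrow> max \<bar>s\<bar> \<bar>t\<bar> > R \<longrightarrow>
        (dd d b' s t \<noteq> 0 \<or> dd d c' s t \<noteq> 0)"
        using R unfolding A_set_def by auto
    qed
  qed
  define R' where "R' = max R 0"
  define K where "K = {-R'..R'} \<times> {-R'..R'}"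
  define F where "F = (\<lambda>z::real\<times>real. max \<bar>dd d a (fst z) (snd z)\<bar> (max \<bar>dd d b (fst z) (snd z)\<bar> \<bar>dd d c (fst z) (snd z)\<bar>))"
  have "compact K" unfolding K_def by (intro compact_Times compact_Icc)
  moreover have "K \<noteq> {}" unfolding K_def R'_def by auto
  moreover have "continuous_on K F" unfolding F_def dd_def Qp_def by (intro continuous_intros)
  ultimately obtain z0 where z0: "z0 \<in> K" "\<forall>z\<in>K. F z0 \<le> F z"
    using continuous_attains_inf by blast
  define m where "m = F z0"
  have m0: "m > 0"
  proof -
    have "(dd d a (fst z0) (snd z0), dd d b (fst z0) (snd z0), dd d c (fst z0) (snd z0)) \<noteq> 0" using N by blast
    then show ?thesis unfolding m_def F_def by (auto simp: zero_prod_def)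
  qed
  define W where "W = (\<Sum>i\<le>d. of_nat i * R'^(i-1))"
  have W0: "W \<ge> 0" unfolding W_def R'_def by (intro sum_nonneg) auto
  define \<delta> where "\<delta> = min \<eta> (min (m/(W+1)) (min \<bar>a (d-2)\<bar> (min \<bar>b (d-1)\<bar> \<bar>c d\<bar>)))"
  have \<delta>0: "\<delta> > 0" unfolding \<delta>_def using eta m0 W0 lead by auto
  have \<delta>W: "\<delta> * W < m"
  proof -
    have "\<delta> \<le> m/(W+1)" unfolding \<delta>_def by (metis min.cobounded1 min.cobounded2 order_trans)
    then have "\<delta> * W \<le> m/(W+1) * W" using W0 by (intro mult_right_mono) auto
    also have "\<dots> < m" using m0 W0 by (simp add: field_simps)
    finally show ?thesis .
  qed
  define V where "V = {(a', b', c'). \<forall>i\<le>d. \<bar>a' i - a i\<bar> < \<delta> \<and> \<bar>b' i - b i\<bar> < \<delta> \<and> \<bar>c' i - (c::nat\<Rightarrow>real) i\<bar> < \<delta>}"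
  have "open V" unfolding V_def by (rule open_V)
  moreover have "(a,b,c) \<in> V" unfolding V_def using \<delta>0 by auto
  moreover have "A_set d \<inter> V \<subseteq> Q_set d"
  proof
    fix q assume q: "q \<in> A_set d \<inter> V"
    obtain a' b' c' where qe: "q = (a',b',c')" by (metis prod_cases3)
    have qA: "(a',b',c') \<in> A_set d" using q qe by auto
    have cl: "\<forall>i\<le>d. \<bar>a' i - a i\<bar> < \<delta> \<and> \<bar>b' i - b i\<bar> < \<delta> \<and> \<bar>c' i - c i\<bar> < \<delta>"
      using q qe unfolding V_def by auto
    have "a' (d-2) \<noteq> 0"
    proof -
      have "\<bar>a' (d-2) - a (d-2)\<bar> < \<bar>a (d-2)\<bar>" using cl unfolding \<delta>_def by force
      then show ?thesis by auto
    qed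
    moreover have "b' (d-1) \<noteq> 0"
    proof -
      have "\<bar>b' (d-1) - b (d-1)\<bar> < \<bar>b (d-1)\<bar>" using cl unfolding \<delta>_def by force
      then show ?thesis by auto
    qed
    moreover have "c' d \<noteq> 0"
    proof -
      have "\<bar>c' d - c d\<bar> < \<bar>c d\<bar>" using cl unfolding \<delta>_def by force
      then show ?thesis by auto
    qed
    ultimately have qC: "(a',b',c') \<in> C_set d" using qA unfolding C_set_def by auto
    have "(dd d a' s t, dd d b' s t, dd d c' s t) \<noteq> 0" for s t
    proof (cases "max \<bar>s\<bar> \<bar>t\<bar> > R'")
      case True
      then have "max \<bar>s\<bar> \<bar>t\<bar> > R" unfolding R'_def by linarith
      moreover have "\<forall>i\<le>d. \<bar>b' i - b i\<bar> < \<eta> \<and> \<bar>c' i - c i\<bar> < \<eta>"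
        using cl unfolding \<delta>_def by force
      ultimately have "dd d b' s t \<noteq> 0 \<or> dd d c' s t \<noteq> 0" using Rout qA by blast
      then show ?thesis by (auto simp: zero_prod_def)
    next
      case False
      then have Ms: "max \<bar>s\<bar> \<bar>t\<bar> \<le> R'" using not_less by blast
      then have "(s,t) \<in> K" unfolding K_def by auto
      then have Fm: "F (s,t) \<ge> m" using z0 unfolding m_def by auto
      have ca: "\<bar>dd d a' s t - dd d a s t\<bar> < m"
        using dd_close[of d a' a \<delta> s t R'] cl Ms \<delta>W unfolding W_def by force
      have cb: "\<bar>dd d b' s t - dd d b s t\<bar> < m"
        using dd_close[of d b' b \<delta> s t R'] cl Ms \<delta>W unfolding W_def by force
      have cc: "\<bar>dd d c' s t - dd d c s t\<bar> < m"
        using dd_close[of d c' c \<delta> s t R'] cl Ms \<delta>W unfolding W_def by force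
      have "dd d a' s t \<noteq> 0 \<or> dd d b' s t \<noteq> 0 \<or> dd d c' s t \<noteq> 0"
        using Fm ca cb cc unfolding F_def by (auto simp: max_def split: if_splits)
      then show ?thesis by (auto simp: zero_prod_def)
    qed
    then have "poly_knot (polymap d (a',b',c'))" using knot_iff by blast
    then show "q \<in> Q_set d" using qC qe unfolding Q_set_def by auto
  qed
  ultimately show ?thesis by blast
qed

theorem mainTheorem11:
  fixes d :: nat
  assumes "d \<ge> 2"
  shows "openin (top_of_set (C_set d)) (Q_set d) \<and> openin (top_of_set (A_set d)) (Q_set d)"
proof -
  have QC: "Q_set d \<subseteq> C_set d" unfolding Q_set_def by auto
  have CA: "C_set d \<subseteq> A_set d" unfolding C_set_def by auto
  have "openin (top_of_set S) (Q_set d)" if "Q_set d \<subseteq> S" "S \<subseteq> A_set d" for S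
  proof (subst openin_subopen, intro ballI)
    fix p assume p: "p \<in> Q_set d"
    obtain a b c where pe: "p = (a,b,c)" by (metis prod_cases3)
    obtain V where V: "open V" "p \<in> V" "A_set d \<inter> V \<subseteq> Q_set d"
      using local_open[OF assms, of a b c] p pe by auto
    show "\<exists>T. openin (top_of_set S) T \<and> p \<in> T \<and> T \<subseteq> Q_set d"
    proof (intro exI conjI)
      show "openin (top_of_set S) (S \<inter> V)" using V(1) by (auto simp: openin_open)
      show "p \<in> S \<inter> V" using V(2) p that by auto
      show "S \<inter> V \<subseteq> Q_set d" using V(3) that by auto
    qed
  qed
  then show ?thesis using QC CA by auto
qed

end
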